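(* For every positive integer $n$, $\Delta\big(t_{1,1}(u-n+1)t_{1,1}(u-n+2)\cdots t_{1,1}(u)\big)= t_{1,1}(u-n+1)t_{1,1}(u-n+2)\cdots t_{1,1}(u)\otimes t_{1,1}(u)\cdots t_{1,1}(u-n+2)t_{1,1}(u-n+1) + n\, t_{1,2}(u-n+1)t_{1,1}(u-n+2)\cdots t_{1,1}(u)\otimes t_{1,1}(u)\cdots t_{1,1}(u-n+2)t_{2,1}(u-n+1)$.
   Context: Let $k$ be an algebraically closed field of characteristic $p>2$. Fix parities $|1|=0$, $|2|=1$. The super Yangian $Y=Y_{1|1}$ is the associative superalgebra over $k$ generated by $t_{i,j}^{(r)}$ ($1\le i,j\le2$, $r>0$) of parity $|i|+|j|\pmod2$, with relations $[t_{i,j}^{(r)},t_{k,l}^{(s)}]=(-1)^{|i||j|+|i||k|+|j||k|}\sum_{t=0}^{\min(r,s)-1}(t_{k,j}^{(t)}t_{i,l}^{(r+s-1-t)}-t_{k,j}^{(r+s-1-t)}t_{i,l}^{(t)})$ (supercommutator), $t_{i,j}^{(0)}=\delta_{ij}$. Put $t_{i,j}(u)=\sum_{r\ge0}t_{i,j}^{(r)}u^{-r}$. The comultiplication $\Delta:Y\to Y\otimes Y$ (a superalgebra homomorphism, with the sign rule $(a\otimes b)(c\otimes d)=(-1)^{|b||c|}ac\otimes bd$) is given by $\Delta(t_{i,j}(u))=\sum_{k=1}^2t_{i,k}(u)\otimes t_{k,j}(u)$, applied coefficientwise in $u^{-1}$. *)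

theory Defs
  imports "HOL-Computational_Algebra.Computational_Algebra"
begin

definition par :: "nat \<Rightarrow> nat" where
  "par i = (if i = 1 then 0 else 1)"

definition tt :: "(nat \<Rightarrow> nat \<Rightarrow> nat \<Rightarrow> 'b::ring_1) \<Rightarrow> nat \<Rightarrow> nat \<Rightarrow> nat \<Rightarrow> 'b" where
  "tt T i j r = (if r = 0 then (if i = j then 1 else 0) else T i j r)"

text \<open>The defining relations of the super Yangian Y(1|1), written with the
  supercommutator [x,y] = xy - (-1)^{|x||y|} yx, for the family T.\<close>
definition yangian_rels :: "(nat \<Rightarrow> nat \<Rightarrow> nat \<Rightarrow> 'b::ring_1) \<Rightarrow> bool" where
  "yangian_rels T \<longleftrightarrow>
     (\<forall>i\<in>{1,2}. \<forall>j\<in>{1,2}. \<forall>k\<in>{1,2}. \<forall>l\<in>{1,2}. \<forall>r>0. \<forall>s>0.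
        T i j r * T k l s
          - (- 1) ^ ((par i + par j) * (par k + par l)) * T k l s * T i j r
        = (- 1) ^ (par i * par j + par i * par k + par j * par k) *
          (\<Sum>t<min r s. tt T k j t * tt T i l (r + s - 1 - t)
                         - tt T k j (r + s - 1 - t) * tt T i l t))"

text \<open>Images of t_{ij}^{(r)} \<otimes> 1 (family A) and 1 \<otimes> t_{kl}^{(s)} (family B)
  super-commute in Y \<otimes> Y (sign rule of the super tensor product).\<close>
definition super_commute_families ::
  "(nat \<Rightarrow> nat \<Rightarrow> nat \<Rightarrow> 'b::ring_1) \<Rightarrow> (nat \<Rightarrow> nat \<Rightarrow> nat \<Rightarrow> 'b) \<Rightarrow> bool" where
  "super_commute_families A B \<longleftrightarrow>
     (\<forall>i\<in>{1,2}. \<forall>j\<in>{1,2}. \<forall>k\<in>{1,2}. \<forall>l\<in>{1,2}. \<forall>r>0. \<forall>s>0.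
        A i j r * B k l s = (- 1) ^ ((par i + par j) * (par k + par l)) * B k l s * A i j r)"

definition is_algebra_over :: "('k::field \<Rightarrow> 'b::ring_1) \<Rightarrow> bool" where
  "is_algebra_over emb \<longleftrightarrow>
     emb 1 = 1 \<and> (\<forall>x y. emb (x + y) = emb x + emb y) \<and> (\<forall>x y. emb (x * y) = emb x * emb y)
     \<and> (\<forall>c z. emb c * z = z * emb c)"

text \<open>Coefficient of u^{-m} in (u - c)^{-r}, expanded in u^{-1}.\<close>
definition shift_coeff :: "nat \<Rightarrow> nat \<Rightarrow> nat \<Rightarrow> nat" where
  "shift_coeff c r m =
     (if r = 0 then (if m = 0 then 1 else 0)
      else if r \<le> m then ((m - 1) choose (r - 1)) * c ^ (m - r) else 0)"

text \<open>The series t_{ij}(u - c) = sum_r t_{ij}^{(r)} (u-c)^{-r}, as a formal power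
  series in X = u^{-1}.\<close>
definition tser :: "(nat \<Rightarrow> nat \<Rightarrow> nat \<Rightarrow> 'b::ring_1) \<Rightarrow> nat \<Rightarrow> nat \<Rightarrow> nat \<Rightarrow> 'b fps" where
  "tser T i j c = Abs_fps (\<lambda>m. \<Sum>r\<le>m. tt T i j r * of_nat (shift_coeff c r m))"

text \<open>Image of Delta(t_{ij}^{(r)}) = sum_k sum_{a+b=r} t_{ik}^{(a)} \<otimes> t_{kj}^{(b)},
  where x \<otimes> y is represented by (x \<otimes> 1)(1 \<otimes> y).\<close>
definition Delta_gen ::
  "(nat \<Rightarrow> nat \<Rightarrow> nat \<Rightarrow> 'b::ring_1) \<Rightarrow> (nat \<Rightarrow> nat \<Rightarrow> nat \<Rightarrow> 'b) \<Rightarrow> nat \<Rightarrow> nat \<Rightarrow> nat \<Rightarrow> 'b" where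
  "Delta_gen A B i j r = (\<Sum>k\<in>{1,2}. \<Sum>a\<le>r. tt A i k a * tt B k j (r - a))"

end

theory Submission imports Defs begin

definition Yc :: "nat \<Rightarrow> nat \<Rightarrow> int fps" where
  "Yc a r = Abs_fps (\<lambda>m. int (shift_coeff a r m))"
definition xsI :: "nat \<Rightarrow> int fps" where
  "xsI a = Abs_fps (\<lambda>m. if m = 0 then 0 else int a ^ (m - 1))"

lemma sc_zero: "m < r \<Longrightarrow> shift_coeff a r m = 0"
  by (simp add: shift_coeff_def)

lemma sc_rec: "shift_coeff a (Suc r) (Suc m) = shift_coeff a r m + a * shift_coeff a (Suc r) m"
proof (cases r)
  case 0
  then show ?thesis by (cases m) (auto simp: shift_coeff_def)
next
  case (Suc r')
  show ?thesis
  proof (cases m)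
    case 0
    then show ?thesis using Suc by (simp add: shift_coeff_def)
  next
    case (Suc m')
    have "Suc r' < m' \<or> Suc r' = m' \<or> m' < Suc r'" by arith
    then show ?thesis using \<open>r = Suc r'\<close> Suc
      apply (elim disjE)
      apply (auto simp: shift_coeff_def algebra_simps)
      apply (subgoal_tac "m' - r' = Suc (m' - Suc r')")
       apply (simp add: algebra_simps)
      apply arith
      done
  qed
qed

lemma Yc_0: "Yc a 0 = 1"
  by (simp add: Yc_def fps_eq_iff shift_coeff_def)

lemma xsI_p: "(1 - fps_const (int a) * fps_X) * xsI a = fps_X"
proof (rule fps_ext)
  fix n
  show "((1 - fps_const (int a) * fps_X) * xsI a) $ n = fps_X $ n"
  proof -
    have "((1 - fps_const (int a) * fps_X) * xsI a) $ n = xsI a $ n - int a * (fps_X * xsI a) $ n"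
      by (simp add: algebra_simps mult.assoc)
    also have "\<dots> = fps_X $ n"
      by (cases n) (auto simp: xsI_def fps_X_mult_nth power_Suc[symmetric] simp del: power_Suc)
    finally show ?thesis .
  qed
qed

lemma p_nz: "(1 - fps_const (int a) * fps_X :: int fps) \<noteq> 0"
proof
  assume "(1 - fps_const (int a) * fps_X :: int fps) = 0"
  then have "(1 - fps_const (int a) * fps_X :: int fps) $ 0 = 0" by simp
  then show False by simp
qed

lemma Yc_Suc: "Yc a (Suc r) = xsI a * Yc a r"
proof -
  let ?p = "1 - fps_const (int a) * fps_X :: int fps"
  have "?p * Yc a (Suc r) = fps_X * Yc a r"
  proof (rule fps_ext)
    fix n
    have "(?p * Yc a (Suc r)) $ n = Yc a (Suc r) $ n - int a * (fps_X * Yc a (Suc r)) $ n"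
      by (simp add: algebra_simps)
    also have "\<dots> = (fps_X * Yc a r) $ n"
    proof (cases n)
      case 0 then show ?thesis by (simp add: Yc_def shift_coeff_def)
    next
      case (Suc m) then show ?thesis by (simp add: Yc_def sc_rec)
    qed
    finally show "(?p * Yc a (Suc r)) $ n = (fps_X * Yc a r) $ n" .
  qed
  also have "\<dots> = ?p * (xsI a * Yc a r)" using xsI_p[of a] by (simp add: mult.assoc)
  finally show ?thesis using p_nz[of a] by simp
qed

lemma Yc_pow: "Yc a r = xsI a ^ r"
  by (induction r) (simp_all add: Yc_0 Yc_Suc)

lemma xs_ident: "of_int (int b - int a) * xsI a * xsI b = xsI b - xsI a"
proof -
  let ?p = "1 - fps_const (int a) * fps_X :: int fps"
  let ?q = "1 - fps_const (int b) * fps_X :: int fps"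
  have "(of_int (int b - int a) * xsI a * xsI b) * (?p * ?q) = of_int (int b - int a) * (?p * xsI a) * (?q * xsI b)"
    by (simp only: ac_simps)
  also have "\<dots> = of_int (int b - int a) * fps_X * fps_X" by (simp only: xsI_p)
  also have "\<dots> = fps_X * ?p - fps_X * ?q"
    by (simp add: algebra_simps fps_of_nat)
  also have "\<dots> = (?q * xsI b) * ?p - (?p * xsI a) * ?q" by (simp only: xsI_p)
  also have "\<dots> = (xsI b - xsI a) * (?p * ?q)" by (simp only: algebra_simps)
  finally show ?thesis using p_nz[of a] p_nz[of b] by simp
qed

lemma cm_lemma:
  fixes c0 d0 Xa Xb U V s k :: "'r::ring_1"
  assumes cXa: "\<And>f. Xa * f = f * Xa" and cXb: "\<And>f. Xb * f = f * Xb"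
    and cs: "\<And>f. s * f = f * s" and ck: "\<And>f. k * f = f * k"
    and hc: "\<And>Q. c0 * Q = s * (Q * c0)" and hd: "\<And>P. P * d0 = s * (d0 * P)"
    and xs: "k * Xa * Xb = Xb - Xa"
  shows "k * ((c0 + Xa*U)*(d0 + Xb*V) - s*((d0+Xb*V)*(c0+Xa*U)))
       = (U*(d0+Xb*V) - s*((d0+Xb*V)*U)) - ((c0+Xa*U)*V - s*(V*(c0+Xa*U)))"
proof -
  have h1: "c0 * (d0 + Xb*V) - s * ((d0 + Xb*V) * c0) = 0" using hc by simp
  have h2: "Xa*U*d0 - s*(d0*(Xa*U)) = 0" using hd[of "Xa*U"] by simp
  have h3: "U*d0 - s*(d0*U) = 0" using hd[of U] by simp
  have h4: "c0*V - s*(V*c0) = 0" using hc[of V] by simp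
  have e1: "(c0 + Xa*U)*(d0 + Xb*V) - s*((d0+Xb*V)*(c0+Xa*U))
     = (c0 * (d0 + Xb*V) - s * ((d0 + Xb*V) * c0)) + (Xa*U*d0 - s*(d0*(Xa*U)))
       + (Xa*U*(Xb*V) - s*(Xb*V*(Xa*U)))"
    by (simp add: algebra_simps)
  have e2: "Xa*U*(Xb*V) = Xa*Xb*(U*V)"
    by (metis cXb mult.assoc)
  have e3: "s*(Xb*V*(Xa*U)) = Xa*Xb*(s*(V*U))"
    by (metis cXa cXb cs mult.assoc)
  have L: "k * ((c0 + Xa*U)*(d0 + Xb*V) - s*((d0+Xb*V)*(c0+Xa*U))) = (Xb - Xa) * (U*V - s*(V*U))"
    unfolding e1 h1 h2 e2 e3 xs[symmetric] by (simp add: algebra_simps)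
  have r1: "U*(d0+Xb*V) - s*((d0+Xb*V)*U) = Xb * (U*V - s*(V*U))"
  proof -
    have "U*(d0+Xb*V) - s*((d0+Xb*V)*U) = (U*d0 - s*(d0*U)) + (U*(Xb*V) - s*(Xb*V*U))"
      by (simp add: algebra_simps)
    also have "U*(Xb*V) = Xb*(U*V)" by (metis cXb mult.assoc)
    also have "s*(Xb*V*U) = Xb*(s*(V*U))" by (metis cXb cs mult.assoc)
    finally show ?thesis unfolding h3 by (simp add: algebra_simps)
  qed
  have r2: "(c0+Xa*U)*V - s*(V*(c0+Xa*U)) = Xa * (U*V - s*(V*U))"
  proof -
    have "(c0+Xa*U)*V - s*(V*(c0+Xa*U)) = (c0*V - s*(V*c0)) + (Xa*U*V - s*(V*(Xa*U)))"
      by (simp add: algebra_simps)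
    also have "s*(V*(Xa*U)) = Xa*(s*(V*U))" by (metis cXa cs mult.assoc)
    finally show ?thesis unfolding h4 by (simp add: algebra_simps)
  qed
  show ?thesis unfolding L r1 r2 by (simp add: algebra_simps)
qed


definition intB :: "int fps \<Rightarrow> 'b::ring_1 fps" where
  "intB f = Abs_fps (\<lambda>m. of_int (f $ m))"

lemma intB_mult: "intB (f * g) = (intB f * intB g :: 'b::ring_1 fps)"
  by (simp add: intB_def fps_eq_iff fps_mult_nth of_int_sum)

lemma intB_diff: "intB (f - g) = (intB f - intB g :: 'b::ring_1 fps)"
  by (simp add: intB_def fps_eq_iff)

lemma intB_of_int: "intB (of_int k) = (of_int k :: 'b::ring_1 fps)"
proof -
  have "(of_int k :: int fps) = fps_const k" by (metis fps_of_int of_int_eq_id id_apply)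
  moreover have "(of_int k :: 'b fps) = fps_const (of_int k)" by (simp add: fps_of_int)
  ultimately show ?thesis by (simp add: intB_def fps_eq_iff fps_const_def)
qed

lemma intB_central: "intB g * f = f * (intB g :: 'b::ring_1 fps)"
proof (rule fps_ext)
  fix m
  have "(intB g * f) $ m = (\<Sum>i=0..m. of_int (g $ i) * f $ (m - i))"
    by (simp add: intB_def fps_mult_nth)
  also have "\<dots> = (\<Sum>i=0..m. of_int (g $ (m - i)) * f $ (m - (m - i)))"
    by (rule sum.atLeastAtMost_rev[of _ 0 m, simplified])
  also have "\<dots> = (\<Sum>i=0..m. f $ i * of_int (g $ (m - i)))"
    by (rule sum.cong) (simp_all add: mult_of_int_commute[of "g $ _"])
  also have "\<dots> = (f * intB g) $ m" by (simp add: intB_def fps_mult_nth)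
  finally show "(intB g * f) $ m = (f * intB g) $ m" .
qed

definition ser :: "(nat \<Rightarrow> 'b::ring_1) \<Rightarrow> nat \<Rightarrow> 'b fps" where
  "ser x a = Abs_fps (\<lambda>m. \<Sum>r\<le>m. x r * of_int (Yc a r $ m))"

definition SS :: "nat \<Rightarrow> nat \<Rightarrow> (nat \<Rightarrow> nat \<Rightarrow> 'b::ring_1) \<Rightarrow> 'b fps" where
  "SS a b z = Abs_fps (\<lambda>m. \<Sum>r\<le>m. \<Sum>s\<le>m. z r s * of_int ((Yc a r * Yc b s) $ m))"

lemma Yc_zero: "m < r \<Longrightarrow> Yc a r $ m = 0"
  by (simp add: Yc_def sc_zero)

lemma ser_nth_ext: "m \<le> n \<Longrightarrow> ser x a $ m = (\<Sum>r\<le>n. x r * of_int (Yc a r $ m))"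
  unfolding ser_def fps_nth_Abs_fps
  by (rule sum.mono_neutral_right[symmetric]) (auto simp: Yc_zero)

lemma P1: "ser x a * ser y b = SS a b (\<lambda>r s. x r * y s)"
proof (rule fps_ext)
  fix m
  have "(ser x a * ser y b) $ m = (\<Sum>i=0..m. ser x a $ i * ser y b $ (m - i))"
    by (simp add: fps_mult_nth)
  also have "\<dots> = (\<Sum>i=0..m. (\<Sum>r\<le>m. x r * of_int (Yc a r $ i)) * (\<Sum>s\<le>m. y s * of_int (Yc b s $ (m - i))))"
    by (rule sum.cong) (simp_all add: ser_nth_ext[of _ m])
  also have "\<dots> = (\<Sum>i=0..m. \<Sum>r\<le>m. \<Sum>s\<le>m. x r * y s * (of_int (Yc a r $ i) * of_int (Yc b s $ (m - i))))"
    by (rule sum.cong) (simp_all add: sum_product mult.assoc mult_of_int_commute[of "Yc a _ $ _"])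
  also have "\<dots> = (\<Sum>r\<le>m. \<Sum>s\<le>m. \<Sum>i=0..m. x r * y s * (of_int (Yc a r $ i) * of_int (Yc b s $ (m - i))))"
    by (subst sum.swap) (rule sum.cong, simp_all add: sum.swap[of _ "{0..m}"])
  also have "\<dots> = SS a b (\<lambda>r s. x r * y s) $ m"
    by (simp add: SS_def fps_mult_nth sum_distrib_left)
  finally show "(ser x a * ser y b) $ m = SS a b (\<lambda>r s. x r * y s) $ m" .
qed

lemma SS_swap: "SS b a z = SS a b (\<lambda>r s. z s r)"
  unfolding SS_def by (subst sum.swap) (simp add: mult.commute)

lemma P2: "ser y b * ser x a = SS a b (\<lambda>r s. y s * x r)"
  unfolding P1 by (rule SS_swap)


lemma of_int_mid: "of_int u * (y * v) = y * (of_int u * v)"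
  by (metis mult.assoc mult_of_int_commute)

lemma intB_of_nat: "intB (of_nat n) = (of_nat n :: 'b::ring_1 fps)"
  using intB_of_int[of "int n"] by simp

lemma intB_ser: "intB g * ser y a = Abs_fps (\<lambda>m. \<Sum>r\<le>m. y r * of_int ((g * Yc a r) $ m))"
proof (rule fps_ext)
  fix m
  have "(intB g * ser y a) $ m = (\<Sum>i=0..m. of_int (g $ i) * ser y a $ (m - i))"
    by (simp add: intB_def fps_mult_nth)
  also have "\<dots> = (\<Sum>i=0..m. of_int (g $ i) * (\<Sum>r\<le>m. y r * of_int (Yc a r $ (m - i))))"
    by (rule sum.cong) (simp_all add: ser_nth_ext[of _ m])
  also have "\<dots> = (\<Sum>i=0..m. \<Sum>r\<le>m. y r * (of_int (g $ i) * of_int (Yc a r $ (m - i))))"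
    by (rule sum.cong) (simp_all add: sum_distrib_left of_int_mid)
  also have "\<dots> = (\<Sum>r\<le>m. \<Sum>i=0..m. y r * (of_int (g $ i) * of_int (Yc a r $ (m - i))))"
    by (rule sum.swap)
  also have "\<dots> = Abs_fps (\<lambda>m. \<Sum>r\<le>m. y r * of_int ((g * Yc a r) $ m)) $ m"
    by (simp add: fps_mult_nth sum_distrib_left)
  finally show "(intB g * ser y a) $ m = Abs_fps (\<lambda>m. \<Sum>r\<le>m. y r * of_int ((g * Yc a r) $ m)) $ m" .
qed

lemma ser_split: "ser x a = fps_const (x 0) + intB (xsI a) * ser (\<lambda>r. x (Suc r)) a"
proof (rule fps_ext)
  fix m
  have R: "(fps_const (x 0) + intB (xsI a) * ser (\<lambda>r. x (Suc r)) a) $ m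
      = (if m = 0 then x 0 else 0) + (\<Sum>r\<le>m. x (Suc r) * of_int (Yc a (Suc r) $ m))"
    by (simp add: intB_ser Yc_Suc)
  show "ser x a $ m = (fps_const (x 0) + intB (xsI a) * ser (\<lambda>r. x (Suc r)) a) $ m"
  proof (cases m)
    case 0
    then show ?thesis unfolding R by (simp add: ser_def Yc_0 Yc_zero)
  next
    case (Suc k)
    have "ser x a $ m = x 0 * of_int (Yc a 0 $ m) + (\<Sum>r\<le>k. x (Suc r) * of_int (Yc a (Suc r) $ m))"
      unfolding ser_def fps_nth_Abs_fps Suc by (rule sum.atMost_Suc_shift)
    also have "\<dots> = (\<Sum>r\<le>k. x (Suc r) * of_int (Yc a (Suc r) $ m))"
      using Suc by (simp add: Yc_0)
    also have "\<dots> = (\<Sum>r\<le>m. x (Suc r) * of_int (Yc a (Suc r) $ m))"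
      using Suc by (simp add: Yc_zero)
    finally show ?thesis unfolding R using Suc by simp
  qed
qed

lemma XT:
  fixes x y :: "nat \<Rightarrow> 'b::ring_1" and \<sigma> :: 'b
  assumes sg: "\<sigma> = 1 \<or> \<sigma> = -1"
    and x0: "x 0 = 0 \<or> (x 0 = 1 \<and> \<sigma> = 1)" and y0: "y 0 = 0 \<or> (y 0 = 1 \<and> \<sigma> = 1)"
  shows "(of_nat b - of_nat a) * (ser x a * ser y b - fps_const \<sigma> * (ser y b * ser x a))
    = (ser (\<lambda>r. x (Suc r)) a * ser y b - fps_const \<sigma> * (ser y b * ser (\<lambda>r. x (Suc r)) a))
      - (ser x a * ser (\<lambda>r. y (Suc r)) b - fps_const \<sigma> * (ser (\<lambda>r. y (Suc r)) b * ser x a))"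
proof -
  let ?Xa = "intB (xsI a) :: 'b fps" and ?Xb = "intB (xsI b) :: 'b fps"
  let ?k = "of_nat b - of_nat a :: 'b fps"
  have xs: "?k * ?Xa * ?Xb = ?Xb - ?Xa"
  proof -
    have "intB (of_int (int b - int a) * xsI a * xsI b) = (intB (xsI b - xsI a) :: 'b fps)"
      by (simp only: xs_ident)
    then show ?thesis by (simp add: intB_mult intB_of_int intB_diff intB_of_nat)
  qed
  have ck: "\<And>f. ?k * f = f * ?k" by (simp add: algebra_simps mult_of_nat_commute)
  have cs: "\<And>f. fps_const \<sigma> * f = f * fps_const \<sigma>" using sg by (auto simp flip: fps_const_neg)
  have hc: "\<And>Q. fps_const (x 0) * Q = fps_const \<sigma> * (Q * fps_const (x 0))" using x0 by auto
  have hd: "\<And>P. P * fps_const (y 0) = fps_const \<sigma> * (fps_const (y 0) * P)" using y0 by auto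
  have e: "ser x a = fps_const (x 0) + ?Xa * ser (\<lambda>r. x (Suc r)) a"
          "ser y b = fps_const (y 0) + ?Xb * ser (\<lambda>r. y (Suc r)) b"
    by (rule ser_split)+
  show ?thesis unfolding e
    by (rule cm_lemma[OF intB_central intB_central cs ck hc hd xs])
qed

lemma SS_diff: "SS a b (\<lambda>r s. z1 r s - z2 r s) = SS a b z1 - SS a b z2"
  by (simp add: SS_def fps_eq_iff sum_subtractf left_diff_distrib)

lemma SS_cmult: "SS a b (\<lambda>r s. c * z r s) = fps_const c * SS a b z"
  by (simp add: SS_def fps_eq_iff sum_distrib_left mult.assoc)

lemma SerRel:
  fixes x y p q :: "nat \<Rightarrow> 'b::ring_1" and \<sigma> \<rho> :: 'b
  assumes sg: "\<sigma> = 1 \<or> \<sigma> = -1"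
    and x0: "x 0 = 0 \<or> (x 0 = 1 \<and> \<sigma> = 1)" and y0: "y 0 = 0 \<or> (y 0 = 1 \<and> \<sigma> = 1)"
    and rel: "\<And>r s. (x (Suc r) * y s - \<sigma> * (y s * x (Suc r))) - (x r * y (Suc s) - \<sigma> * (y (Suc s) * x r))
                 = \<rho> * (p r * q s - p s * q r)"
  shows "(of_nat b - of_nat a) * (ser x a * ser y b - fps_const \<sigma> * (ser y b * ser x a))
    = fps_const \<rho> * (ser p a * ser q b - ser p b * ser q a)"
proof -
  have "(ser (\<lambda>r. x (Suc r)) a * ser y b - fps_const \<sigma> * (ser y b * ser (\<lambda>r. x (Suc r)) a))
      - (ser x a * ser (\<lambda>r. y (Suc r)) b - fps_const \<sigma> * (ser (\<lambda>r. y (Suc r)) b * ser x a))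
      = SS a b (\<lambda>r s. (x (Suc r) * y s - \<sigma> * (y s * x (Suc r))) - (x r * y (Suc s) - \<sigma> * (y (Suc s) * x r)))"
    by (simp only: SS_diff SS_cmult P1[symmetric] P2[symmetric])
  also have "\<dots> = SS a b (\<lambda>r s. \<rho> * (p r * q s - p s * q r))"
    by (simp only: rel)
  also have "\<dots> = fps_const \<rho> * (ser p a * ser q b - ser p b * ser q a)"
    by (simp only: SS_diff SS_cmult P1[symmetric] P2[symmetric])
  finally show ?thesis using XT[where \<sigma>=\<sigma> and x=x and y=y and a=a and b=b, OF sg x0 y0] by simp
qed

lemma ser_add: "ser (\<lambda>r. f r + g r) a = ser f a + ser g a"
  by (simp add: ser_def fps_eq_iff sum.distrib distrib_right)

lemma ser_comm:
  assumes "\<And>r s. x r * y s = y s * x r"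
  shows "ser x a * ser y b = ser y b * ser x a"
proof -
  have "ser x a * ser y b = SS a b (\<lambda>r s. x r * y s)" by (rule P1)
  also have "\<dots> = SS a b (\<lambda>r s. y s * x r)" by (simp only: assms)
  also have "\<dots> = ser y b * ser x a" by (rule P2[symmetric])
  finally show ?thesis .
qed

lemma ser_anticomm:
  assumes "\<And>r s. x r * y s = - (y s * x r)"
  shows "ser x a * ser y b = - (ser y b * ser x a)"
proof -
  have "ser x a * ser y b = SS a b (\<lambda>r s. (-1) * (y s * x r))" by (simp add: P1 assms)
  also have "\<dots> = fps_const (-1) * (ser y b * ser x a)" by (simp only: SS_cmult P2)
  also have "\<dots> = - (ser y b * ser x a)" by (simp flip: fps_const_neg)
  finally show ?thesis .
qed

lemma CONV: "ser (\<lambda>m. \<Sum>r\<le>m. x r * y (m - r)) a = ser x a * ser y a"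
proof (rule fps_ext)
  fix m
  define F where "F r s = x r * y s * of_int (Yc a (r + s) $ m)" for r s
  have Fz: "m < r + s \<Longrightarrow> F r s = 0" for r s by (simp add: F_def Yc_zero)
  have Fz': "F r s \<noteq> 0 \<Longrightarrow> r + s \<le> m" for r s using Fz[of r s] by linarith
  have "ser (\<lambda>m. \<Sum>r\<le>m. x r * y (m - r)) a $ m = (\<Sum>N\<le>m. \<Sum>r\<le>N. F r (N - r))"
    by (simp add: ser_def F_def sum_distrib_right)
  also have "\<dots> = (\<Sum>(r, s)\<in>{(r, s). r + s \<le> m}. F r s)"
    by (rule sum.triangle_reindex_eq[symmetric])
  also have "\<dots> = (\<Sum>(r, s)\<in>{..m} \<times> {..m}. F r s)"
    by (rule sum.mono_neutral_left) (auto simp: Fz')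
  also have "\<dots> = (\<Sum>r\<le>m. \<Sum>s\<le>m. F r s)"
    by (simp add: sum.cartesian_product)
  also have "\<dots> = (ser x a * ser y a) $ m"
    by (simp add: P1 SS_def F_def Yc_pow power_add)
  finally show "ser (\<lambda>m. \<Sum>r\<le>m. x r * y (m - r)) a $ m = (ser x a * ser y a) $ m" .
qed

definition PA :: "(nat \<Rightarrow> 'r::monoid_mult) \<Rightarrow> nat \<Rightarrow> nat \<Rightarrow> 'r" where
  "PA T n c = prod_list (map (\<lambda>i. T (c + i)) (rev [0..<n]))"
definition QB :: "(nat \<Rightarrow> 'r::monoid_mult) \<Rightarrow> nat \<Rightarrow> nat \<Rightarrow> 'r" where
  "QB T n c = prod_list (map (\<lambda>i. T (c + i)) [0..<n])"

lemma PA_0[simp]: "PA T 0 c = 1" by (simp add: PA_def)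
lemma QB_0[simp]: "QB T 0 c = 1" by (simp add: QB_def)
lemma PA_Suc: "PA T (Suc n) c = T (c + n) * PA T n c" by (simp add: PA_def)
lemma QB_Suc: "QB T (Suc n) c = QB T n c * T (c + n)" by (simp add: QB_def)
lemma PA_Suc': "PA T (Suc n) c = PA T n (Suc c) * T c"
  by (induction n) (simp_all add: PA_Suc mult.assoc)
lemma QB_Suc': "QB T (Suc n) c = T c * QB T n (Suc c)"
  by (induction n) (simp_all add: QB_Suc mult.assoc)

lemma comm_QB:
  assumes "\<And>d. X * T d = T d * X"
  shows "X * QB T n c = QB T n c * X"
  by (induction n) (simp_all add: QB_Suc mult.assoc[symmetric], simp_all add: mult.assoc assms)

lemma chainA:
  fixes TA EA :: "nat \<Rightarrow> 'r::ring_1"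
  assumes L2: "\<And>d. TA (Suc d) * EA d = EA (Suc d) * TA d"
  shows "PA TA N (Suc c) * EA c = EA (c + N) * PA TA N c"
proof (induction N)
  case 0 then show ?case by simp
next
  case (Suc N)
  have "PA TA (Suc N) (Suc c) * EA c = TA (Suc (c + N)) * (PA TA N (Suc c) * EA c)"
    by (simp add: PA_Suc mult.assoc)
  also have "\<dots> = (TA (Suc (c + N)) * EA (c + N)) * PA TA N c" by (simp add: Suc mult.assoc)
  also have "\<dots> = EA (c + Suc N) * (TA (c + N) * PA TA N c)" by (simp add: L2 mult.assoc)
  finally show ?case by (simp add: PA_Suc)
qed

lemma chainB:
  fixes TB FB :: "nat \<Rightarrow> 'r::ring_1"
  assumes L4: "\<And>d. FB d * TB (Suc d) = TB d * FB (Suc d)"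
  shows "FB c * QB TB N (Suc c) = QB TB N c * FB (c + N)"
proof (induction N arbitrary: c)
  case 0 then show ?case by simp
next
  case (Suc N)
  have "FB c * QB TB (Suc N) (Suc c) = (FB c * TB (Suc c)) * QB TB N (Suc (Suc c))"
    by (simp add: QB_Suc' mult.assoc)
  also have "\<dots> = TB c * (FB (Suc c) * QB TB N (Suc (Suc c)))" by (simp add: L4 mult.assoc)
  also have "\<dots> = TB c * QB TB N (Suc c) * FB (c + Suc N)" by (simp add: Suc mult.assoc)
  finally show ?case by (simp add: QB_Suc')
qed


lemma ofnat_mid: "x * (of_nat m * y) = of_nat m * (x * (y::'r::semiring_1))"
  by (metis mult.assoc mult_of_nat_commute)

lemma three_mult: "(3::'r::semiring_1) * x = x + x + x"
proof -
  have "(3::'r) = 1 + 1 + 1" by simp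
  then show ?thesis by (metis distrib_right mult_1)
qed

lemma Ck:
  fixes TB FB :: "nat \<Rightarrow> 'r::ring_1"
  assumes TBc: "\<And>c d. TB c * TB d = TB d * TB c"
    and L5: "\<And>c k. of_nat k * (TB (c + k) * FB c - FB c * TB (c + k)) = FB c * TB (c + k) - FB (c + k) * TB c"
  shows "QB TB (Suc k) (Suc c) * FB c = of_nat (k + 2) * (FB c * QB TB (Suc k) (Suc c))
           - of_nat (k + 1) * (FB (Suc c) * (TB c * QB TB k (Suc (Suc c))))"
proof (induction k)
  case 0
  have h: "of_nat 1 * (TB (c + 1) * FB c - FB c * TB (c + 1)) = FB c * TB (c + 1) - FB (c + 1) * TB c"
    by (rule L5)
  then show ?case by (simp add: QB_Suc algebra_simps mult_2)
next
  case (Suc k)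
  let ?R = "\<lambda>j. QB TB j (Suc c)" and ?R' = "\<lambda>j. QB TB j (Suc (Suc c))"
  let ?T = "\<lambda>j. TB (c + j)" and ?F = "\<lambda>j. FB (c + j)"
  have cen: "\<And>m x. (of_nat m :: 'r) * x = x * of_nat m" by (rule mult_of_nat_commute)
  have r1: "?R (Suc (Suc k)) = ?T (k + 2) * ?R (Suc k)"
    using comm_QB[of "TB (c + (k+2))" TB "Suc k" "Suc c"] TBc by (simp add: QB_Suc)
  have e1: "of_nat (k + 2) * (?T (k + 2) * ?F 0) = of_nat (k + 3) * (?F 0 * ?T (k + 2)) - ?F (k + 2) * ?T 0"
    using L5[where c=c and k="k + 2"] by (simp add: algebra_simps three_mult)
  have e2: "of_nat (k + 1) * (?T (k + 2) * FB (Suc c)) = of_nat (k + 2) * (FB (Suc c) * ?T (k + 2)) - ?F (k + 2) * TB (Suc c)"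
    using L5[where c="Suc c" and k="k + 1"] by (simp add: algebra_simps)
  have r2: "?T 0 * ?R (Suc k) = TB (Suc c) * (?T 0 * ?R' k)"
    by (simp add: QB_Suc' mult.assoc[symmetric] TBc)
  have r3: "?T (k + 2) * (?T 0 * ?R' k) = ?T 0 * ?R' (Suc k)"
  proof -
    have "?R' (Suc k) = ?T (k + 2) * ?R' k"
      using comm_QB[of "TB (c + (k+2))" TB k "Suc (Suc c)"] TBc by (simp add: QB_Suc)
    then show ?thesis by (simp add: mult.assoc[symmetric] TBc)
  qed
  have "?R (Suc (Suc k)) * ?F 0 = ?T (k + 2) * (?R (Suc k) * FB c)"
    by (simp add: r1 mult.assoc)
  also have "\<dots> = ?T (k + 2) * (of_nat (k + 2) * (FB c * ?R (Suc k))
           - of_nat (k + 1) * (FB (Suc c) * (TB c * ?R' k)))"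
    by (simp only: Suc.IH)
  also have "\<dots> = of_nat (k + 2) * (?T (k + 2) * ?F 0) * ?R (Suc k)
        - of_nat (k + 1) * (?T (k + 2) * FB (Suc c)) * (?T 0 * ?R' k)"
    by (simp add: algebra_simps ofnat_mid)
  also have "\<dots> = (of_nat (k + 3) * (?F 0 * ?T (k + 2)) - ?F (k + 2) * ?T 0) * ?R (Suc k)
        - (of_nat (k + 2) * (FB (Suc c) * ?T (k + 2)) - ?F (k + 2) * TB (Suc c)) * (?T 0 * ?R' k)"
    by (simp only: e1 e2)
  also have "\<dots> = of_nat (k + 3) * (?F 0 * (?T (k + 2) * ?R (Suc k))) - ?F (k + 2) * (?T 0 * ?R (Suc k))
        - of_nat (k + 2) * (FB (Suc c) * (?T (k + 2) * (?T 0 * ?R' k))) + ?F (k + 2) * (TB (Suc c) * (?T 0 * ?R' k))"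
    by (simp add: algebra_simps)
  also have "\<dots> = of_nat (k + 3) * (?F 0 * ?R (Suc (Suc k)))
        - of_nat (k + 2) * (FB (Suc c) * (?T 0 * ?R' (Suc k)))"
    by (simp only: r1[symmetric] r2 r3) simp
  also have "(of_nat (k + 3)::'r) = of_nat (Suc k + 2)" by simp
  also have "(of_nat (k + 2)::'r) = of_nat (Suc k + 1)" by simp
  finally show ?case by simp
qed


lemma Bside:
  fixes TB FB :: "nat \<Rightarrow> 'r::ring_1"
  assumes TBc: "\<And>c d. TB c * TB d = TB d * TB c"
    and L4: "\<And>d. FB d * TB (Suc d) = TB d * FB (Suc d)"
    and L5: "\<And>c k. of_nat k * (TB (c + k) * FB c - FB c * TB (c + k)) = FB c * TB (c + k) - FB (c + k) * TB c"
  shows "QB TB (Suc n) (Suc c) * FB c + of_nat (Suc n) * (QB TB n (Suc c) * FB (c + Suc n) * TB c)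
       = of_nat (Suc (Suc n)) * (QB TB (Suc n) c * FB (c + Suc n))"
proof -
  have c1: "FB c * QB TB (Suc n) (Suc c) = QB TB (Suc n) c * FB (c + Suc n)"
    by (rule chainB[where FB=FB and TB=TB, OF L4])
  have c2: "FB (Suc c) * (TB c * QB TB n (Suc (Suc c))) = QB TB n (Suc c) * FB (c + Suc n) * TB c"
  proof -
    have "TB c * QB TB n (Suc (Suc c)) = QB TB n (Suc (Suc c)) * TB c"
      by (rule comm_QB) (rule TBc)
    then have "FB (Suc c) * (TB c * QB TB n (Suc (Suc c))) = (FB (Suc c) * QB TB n (Suc (Suc c))) * TB c"
      by (simp add: mult.assoc)
    also have "\<dots> = QB TB n (Suc c) * FB (Suc c + n) * TB c"
      by (simp only: chainB[where FB=FB and TB=TB, OF L4])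
    finally show ?thesis by simp
  qed
  show ?thesis
    using Ck[where TB=TB and FB=FB and k=n and c=c, OF TBc L5] unfolding c1 c2 by (simp add: algebra_simps)
qed

lemma core:
  fixes TA EA TB FB :: "nat \<Rightarrow> 'r::ring_1"
  assumes TBc: "\<And>c d. TB c * TB d = TB d * TB c"
    and L2: "\<And>d. TA (Suc d) * EA d = EA (Suc d) * TA d"
    and L3: "\<And>d. EA (Suc d) * EA d = 0"
    and L4: "\<And>d. FB d * TB (Suc d) = TB d * FB (Suc d)"
    and L5: "\<And>c k. of_nat k * (TB (c + k) * FB c - FB c * TB (c + k)) = FB c * TB (c + k) - FB (c + k) * TB c"
    and X1: "\<And>c d. TA c * TB d = TB d * TA c"
    and X2: "\<And>c d. EA c * TB d = TB d * EA c"
    and X3: "\<And>c d. TA c * FB d = FB d * TA c"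
    and X4: "\<And>c d. EA c * FB d = - (FB d * EA c)"
  shows "PA (\<lambda>i. TA i * TB i + EA i * FB i) (Suc n) c
       = PA TA (Suc n) c * QB TB (Suc n) c
         + of_nat (Suc n) * ((EA (c + n) * PA TA n c) * (QB TB n c * FB (c + n)))"
proof (induction n arbitrary: c)
  case 0
  then show ?case by (simp add: PA_Suc QB_Suc)
next
  case (Suc n)
  let ?D = "\<lambda>i. TA i * TB i + EA i * FB i"
  let ?P = "PA TA (Suc n) (Suc c)" and ?Q = "QB TB (Suc n) (Suc c)"
  let ?E = "EA (c + Suc n)" and ?P' = "PA TA n (Suc c)" and ?Q' = "QB TB n (Suc c)"
  let ?F = "FB (c + Suc n)" and ?N = "of_nat (Suc n) :: 'r"
  have f1: "?Q * TA c = TA c * ?Q" by (rule comm_QB[symmetric]) (rule X1)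
  have f2: "?Q * EA c = EA c * ?Q" by (rule comm_QB[symmetric]) (rule X2)
  have f3: "?Q' * TA c = TA c * ?Q'" by (rule comm_QB[symmetric]) (rule X1)
  have f4: "?Q' * EA c = EA c * ?Q'" by (rule comm_QB[symmetric]) (rule X2)
  have f5: "?F * TA c = TA c * ?F" by (rule X3[symmetric])
  have f6: "?F * EA c = - (EA c * ?F)" using X4[of c "c + Suc n"] by simp
  have f3': "?Q' * (TA c * X) = TA c * (?Q' * X)" for X by (simp only: mult.assoc[symmetric] f3)
  have f4': "?Q' * (EA c * X) = EA c * (?Q' * X)" for X by (simp only: mult.assoc[symmetric] f4)
  have f5': "?F * (TA c * X) = TA c * (?F * X)" for X by (simp only: mult.assoc[symmetric] f5)
  have f6': "?F * (EA c * X) = - (EA c * (?F * X))" for X by (simp only: mult.assoc[symmetric] f6 mult_minus_left)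
  have a1: "?P * TA c = PA TA (Suc (Suc n)) c" by (simp only: PA_Suc')
  have a2: "?Q * TB c = QB TB (Suc (Suc n)) c"
  proof -
    have "?Q * TB c = TB c * ?Q" by (rule comm_QB[symmetric]) (rule TBc)
    then show ?thesis by (simp only: QB_Suc')
  qed
  have a3: "?P * EA c = ?E * PA TA (Suc n) c" by (rule chainA[where TA=TA and EA=EA, OF L2])
  have a4: "?P' * TA c = PA TA (Suc n) c" by (simp only: PA_Suc')
  have a5: "?E * (?P' * EA c) = 0"
  proof -
    have "?P' * EA c = EA (c + n) * PA TA n c" by (rule chainA[where TA=TA and EA=EA, OF L2])
    then have "?E * (?P' * EA c) = (EA (Suc (c + n)) * EA (c + n)) * PA TA n c"
      by (simp add: mult.assoc)
    then show ?thesis by (simp add: L3)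
  qed
  have IH: "PA ?D (Suc n) (Suc c) = ?P * ?Q + ?N * ((?E * ?P') * (?Q' * ?F))"
    using Suc.IH[of "Suc c"] by simp
  have t1: "?P * ?Q * TA c * TB c = PA TA (Suc (Suc n)) c * QB TB (Suc (Suc n)) c"
  proof -
    have "?P * ?Q * TA c * TB c = (?P * TA c) * (?Q * TB c)" by (simp add: mult.assoc f1)
    then show ?thesis by (simp only: a1 a2)
  qed
  have t2: "?P * ?Q * EA c * FB c = ?E * PA TA (Suc n) c * (?Q * FB c)"
  proof -
    have "?P * ?Q * EA c * FB c = (?P * EA c) * (?Q * FB c)" by (simp add: mult.assoc f2)
    then show ?thesis by (simp only: a3)
  qed
  have t3: "?E * ?P' * (?Q' * ?F) * TA c * TB c = ?E * PA TA (Suc n) c * (?Q' * ?F * TB c)"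
  proof -
    have "?E * ?P' * (?Q' * ?F) * TA c * TB c = ?E * (?P' * TA c) * (?Q' * ?F * TB c)"
      by (simp only: mult.assoc f5' f3')
    then show ?thesis by (simp only: a4)
  qed
  have t4: "?E * ?P' * (?Q' * ?F) * EA c * FB c = 0"
  proof -
    have "?E * ?P' * (?Q' * ?F) * EA c * FB c = - (?E * (?P' * EA c) * (?Q' * ?F * FB c))"
      by (simp only: mult.assoc f6' f4' mult_minus_right)
    then show ?thesis by (simp only: a5) simp
  qed
  have BI: "?Q * FB c + ?N * (?Q' * ?F * TB c) = of_nat (Suc (Suc n)) * (QB TB (Suc n) c * ?F)"
    by (rule Bside[where TB=TB and FB=FB, OF TBc L4 L5])
  have "PA ?D (Suc (Suc n)) c = PA ?D (Suc n) (Suc c) * ?D c" by (simp only: PA_Suc')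
  also have "\<dots> = (?P * ?Q + ?N * ((?E * ?P') * (?Q' * ?F))) * (TA c * TB c + EA c * FB c)"
    by (simp only: IH)
  also have "\<dots> = ?P * ?Q * TA c * TB c + ?P * ?Q * EA c * FB c
       + ?N * (?E * ?P' * (?Q' * ?F) * TA c * TB c) + ?N * (?E * ?P' * (?Q' * ?F) * EA c * FB c)"
    by (simp add: algebra_simps)
  also have "\<dots> = PA TA (Suc (Suc n)) c * QB TB (Suc (Suc n)) c
       + ?E * PA TA (Suc n) c * (?Q * FB c + ?N * (?Q' * ?F * TB c))"
    unfolding t1 t2 t3 t4 by (simp add: algebra_simps ofnat_mid)
  also have "\<dots> = PA TA (Suc (Suc n)) c * QB TB (Suc (Suc n)) c
       + of_nat (Suc (Suc n)) * ((?E * PA TA (Suc n) c) * (QB TB (Suc n) c * ?F))"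
    unfolding BI by (simp only: ofnat_mid mult.assoc)
  finally show ?case .
qed


lemma SF:
  fixes C g :: "nat \<Rightarrow> nat \<Rightarrow> 'b::ring_1" and \<rho> :: 'b
  assumes rel: "\<And>r s. 0 < r \<Longrightarrow> 0 < s \<Longrightarrow> C r s = \<rho> * (\<Sum>t<min r s. g t (r + s - 1 - t))"
    and C0: "\<And>s. C 0 s = 0" and C0': "\<And>r. C r 0 = 0"
    and anti: "\<And>t w. g t w = - g w t" and diag: "\<And>t. g t t = 0"
  shows "C (Suc r) s - C r (Suc s) = \<rho> * g r s"
proof (cases "r = 0")
  case True
  show ?thesis
  proof (cases "s = 0")
    case True
    then show ?thesis using \<open>r = 0\<close> by (simp add: C0 C0' diag)
  next
    case False
    then show ?thesis using \<open>r = 0\<close> rel[of 1 s] by (simp add: C0)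
  qed
next
  case False
  show ?thesis
  proof (cases "s = 0")
    case True
    then show ?thesis using False rel[of r 1] anti[of r 0] by (simp add: C0')
  next
    case s: False
    have e1: "C (Suc r) s = \<rho> * (\<Sum>t<min (Suc r) s. g t (r + s - t))"
      using rel[of "Suc r" s] s by simp
    have e2: "C r (Suc s) = \<rho> * (\<Sum>t<min r (Suc s). g t (r + s - t))"
      using rel[of r "Suc s"] False by simp
    have "r < s \<or> s < r \<or> r = s" by arith
    then show ?thesis
    proof (elim disjE)
      assume "r < s"
      then have "min (Suc r) s = Suc r" "min r (Suc s) = r" by simp_all
      then show ?thesis unfolding e1 e2 by (simp add: algebra_simps)
    next
      assume "s < r"
      then have "min (Suc r) s = s" "min r (Suc s) = Suc s" by simp_all
      then show ?thesis unfolding e1 e2 using anti[of r s] by (simp add: algebra_simps)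
    next
      assume "r = s"
      then show ?thesis unfolding e1 e2 by (simp add: diag)
    qed
  qed
qed

lemma sign_even: "(-1::'b::ring_1) ^ (2 * m) = 1"
  by (simp add: power_mult)

lemma YR_SF:
  fixes T :: "nat \<Rightarrow> nat \<Rightarrow> nat \<Rightarrow> 'b::ring_1"
  assumes Y: "yangian_rels T" and ij: "i \<in> {1,2}" "j \<in> {1,2}" "k \<in> {1,2}" "l \<in> {1,2}"
  shows "(tt T i j (Suc r) * tt T k l s - (-1) ^ ((par i + par j) * (par k + par l)) * (tt T k l s * tt T i j (Suc r)))
       - (tt T i j r * tt T k l (Suc s) - (-1) ^ ((par i + par j) * (par k + par l)) * (tt T k l (Suc s) * tt T i j r))
     = (-1) ^ (par i * par j + par i * par k + par j * par k) * (tt T k j r * tt T i l s - tt T k j s * tt T i l r)"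
proof -
  let ?\<sigma> = "(-1::'b) ^ ((par i + par j) * (par k + par l))"
  let ?\<rho> = "(-1::'b) ^ (par i * par j + par i * par k + par j * par k)"
  have s1: "i = j \<Longrightarrow> ?\<sigma> = 1"
  proof -
    assume "i = j"
    then have "(par i + par j) * (par k + par l) = 2 * (par i * (par k + par l))" by simp
    then show ?thesis by (simp only: sign_even)
  qed
  have s2: "k = l \<Longrightarrow> ?\<sigma> = 1"
  proof -
    assume "k = l"
    then have "(par i + par j) * (par k + par l) = 2 * ((par i + par j) * par k)" by simp
    then show ?thesis by (simp only: sign_even)
  qed
  show ?thesis
  proof (rule SF[where C="\<lambda>r s. tt T i j r * tt T k l s - ?\<sigma> * (tt T k l s * tt T i j r)"
        and g="\<lambda>t w. tt T k j t * tt T i l w - tt T k j w * tt T i l t"])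
    fix r s :: nat
    assume "0 < r" "0 < s"
    then show "tt T i j r * tt T k l s - ?\<sigma> * (tt T k l s * tt T i j r)
      = ?\<rho> * (\<Sum>t<min r s. tt T k j t * tt T i l (r + s - 1 - t) - tt T k j (r + s - 1 - t) * tt T i l t)"
    proof -
      have "\<forall>r>0. \<forall>s>0. T i j r * T k l s - ?\<sigma> * T k l s * T i j r
        = ?\<rho> * (\<Sum>t<min r s. tt T k j t * tt T i l (r + s - 1 - t) - tt T k j (r + s - 1 - t) * tt T i l t)"
        using Y ij unfolding yangian_rels_def by blast
      then have "T i j r * T k l s - ?\<sigma> * T k l s * T i j r
        = ?\<rho> * (\<Sum>t<min r s. tt T k j t * tt T i l (r + s - 1 - t) - tt T k j (r + s - 1 - t) * tt T i l t)"
        using \<open>0 < r\<close> \<open>0 < s\<close> by blast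
      moreover have "tt T i j r = T i j r" "tt T k l s = T k l s"
        using \<open>0 < r\<close> \<open>0 < s\<close> by (simp_all add: tt_def)
      ultimately show ?thesis by (simp only: mult.assoc)
    qed
  next
    fix s
    show "tt T i j 0 * tt T k l s - ?\<sigma> * (tt T k l s * tt T i j 0) = 0"
      using s1 by (cases "i = j") (simp_all add: tt_def)
  next
    fix r
    show "tt T i j r * tt T k l 0 - ?\<sigma> * (tt T k l 0 * tt T i j r) = 0"
      using s2 by (cases "k = l") (simp_all add: tt_def)
  qed simp_all
qed

lemma Tcomm:
  fixes T :: "nat \<Rightarrow> nat \<Rightarrow> nat \<Rightarrow> 'b::ring_1"
  assumes Y: "yangian_rels T"
  shows "tt T 1 1 r * tt T 1 1 s = tt T 1 1 s * tt T 1 1 r"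
proof -
  define C where "C r s = tt T 1 1 r * tt T 1 1 s - tt T 1 1 s * tt T 1 1 r" for r s
  have step: "C (Suc r) s = C r (Suc s) + C r s" for r s
    using YR_SF[OF Y, of 1 1 1 1 r s] by (simp add: C_def par_def algebra_simps)
  have "C r s = 0" for r s
  proof (induction r arbitrary: s)
    case 0 then show ?case by (simp add: C_def tt_def)
  next
    case (Suc r) then show ?case by (simp add: step)
  qed
  then show ?thesis by (simp add: C_def)
qed

lemma tser_ser: "tser T i j c = ser (tt T i j) c"
  by (simp add: tser_def ser_def Yc_def)

lemma Delta_ser:
  "ser (tt (Delta_gen A B) 1 1) c = ser (tt A 1 1) c * ser (tt B 1 1) c + ser (tt A 1 2) c * ser (tt B 2 1) c"
proof -
  have "tt (Delta_gen A B) 1 1 = (\<lambda>r. (\<Sum>a\<le>r. tt A 1 1 a * tt B 1 1 (r - a)) + (\<Sum>a\<le>r. tt A 1 2 a * tt B 2 1 (r - a)))"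
  proof
    fix r
    show "tt (Delta_gen A B) 1 1 r = (\<Sum>a\<le>r. tt A 1 1 a * tt B 1 1 (r - a)) + (\<Sum>a\<le>r. tt A 1 2 a * tt B 2 1 (r - a))"
      by (cases "r = 0") (simp_all add: tt_def Delta_gen_def)
  qed
  then show ?thesis by (simp add: ser_add CONV)
qed


lemma tt0: "tt T i j 0 = (if i = j then 1 else 0)" by (simp add: tt_def)

lemma ser_L2:
  fixes A :: "nat \<Rightarrow> nat \<Rightarrow> nat \<Rightarrow> 'b::ring_1"
  assumes Y: "yangian_rels A"
  shows "ser (tt A 1 1) (Suc d) * ser (tt A 1 2) d = ser (tt A 1 2) (Suc d) * ser (tt A 1 1) d"
proof -
  have "(of_nat (Suc d) - of_nat d) * (ser (tt A 1 1) d * ser (tt A 1 2) (Suc d) - fps_const 1 * (ser (tt A 1 2) (Suc d) * ser (tt A 1 1) d))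
      = fps_const 1 * (ser (tt A 1 1) d * ser (tt A 1 2) (Suc d) - ser (tt A 1 1) (Suc d) * ser (tt A 1 2) d)"
  proof (rule SerRel)
    fix r s
    show "(tt A 1 1 (Suc r) * tt A 1 2 s - 1 * (tt A 1 2 s * tt A 1 1 (Suc r))) - (tt A 1 1 r * tt A 1 2 (Suc s) - 1 * (tt A 1 2 (Suc s) * tt A 1 1 r))
      = 1 * (tt A 1 1 r * tt A 1 2 s - tt A 1 1 s * tt A 1 2 r)"
      using YR_SF[OF Y, of 1 1 1 2 r s] by (simp add: par_def)
  qed (simp_all add: tt0)
  then show ?thesis by simp
qed

lemma ser_L3:
  fixes A :: "nat \<Rightarrow> nat \<Rightarrow> nat \<Rightarrow> 'b::ring_1"
  assumes Y: "yangian_rels A"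
  shows "ser (tt A 1 2) (Suc d) * ser (tt A 1 2) d + ser (tt A 1 2) (Suc d) * ser (tt A 1 2) d = 0"
proof -
  have "(of_nat d - of_nat (Suc d)) * (ser (tt A 1 2) (Suc d) * ser (tt A 1 2) d - fps_const (-1) * (ser (tt A 1 2) d * ser (tt A 1 2) (Suc d)))
      = fps_const 1 * (ser (tt A 1 2) (Suc d) * ser (tt A 1 2) d - ser (tt A 1 2) d * ser (tt A 1 2) (Suc d))"
  proof (rule SerRel)
    fix r s
    show "(tt A 1 2 (Suc r) * tt A 1 2 s - (-1) * (tt A 1 2 s * tt A 1 2 (Suc r))) - (tt A 1 2 r * tt A 1 2 (Suc s) - (-1) * (tt A 1 2 (Suc s) * tt A 1 2 r))
      = 1 * (tt A 1 2 r * tt A 1 2 s - tt A 1 2 s * tt A 1 2 r)"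
      using YR_SF[OF Y, of 1 2 1 2 r s] by (simp add: par_def)
  qed (simp_all add: tt0)
  then have h: "- (ser (tt A 1 2) (Suc d) * ser (tt A 1 2) d) = ser (tt A 1 2) (Suc d) * ser (tt A 1 2) d"
    by (simp add: algebra_simps flip: fps_const_neg)
  show ?thesis by (metis h add.right_inverse)
qed

lemma ser_L45:
  fixes B :: "nat \<Rightarrow> nat \<Rightarrow> nat \<Rightarrow> 'b::ring_1"
  assumes Y: "yangian_rels B"
  shows "(of_nat b - of_nat a) * (ser (tt B 1 1) a * ser (tt B 2 1) b - ser (tt B 2 1) b * ser (tt B 1 1) a)
       = ser (tt B 2 1) a * ser (tt B 1 1) b - ser (tt B 2 1) b * ser (tt B 1 1) a"
proof -
  have "(of_nat b - of_nat a) * (ser (tt B 1 1) a * ser (tt B 2 1) b - fps_const 1 * (ser (tt B 2 1) b * ser (tt B 1 1) a))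
      = fps_const 1 * (ser (tt B 2 1) a * ser (tt B 1 1) b - ser (tt B 2 1) b * ser (tt B 1 1) a)"
  proof (rule SerRel)
    fix r s
    show "(tt B 1 1 (Suc r) * tt B 2 1 s - 1 * (tt B 2 1 s * tt B 1 1 (Suc r))) - (tt B 1 1 r * tt B 2 1 (Suc s) - 1 * (tt B 2 1 (Suc s) * tt B 1 1 r))
      = 1 * (tt B 2 1 r * tt B 1 1 s - tt B 2 1 s * tt B 1 1 r)"
      using YR_SF[OF Y, of 1 1 2 1 r s] by (simp add: par_def)
  qed (simp_all add: tt0)
  then show ?thesis by simp
qed

lemma cross_coef:
  fixes A B :: "nat \<Rightarrow> nat \<Rightarrow> nat \<Rightarrow> 'b::ring_1"
  assumes X: "super_commute_families A B" and ij: "i \<in> {1,2}" "j \<in> {1,2}" "k \<in> {1,2}" "l \<in> {1,2}"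
    and pos: "0 < r" "0 < s"
  shows "tt A i j r * tt B k l s = (- 1) ^ ((par i + par j) * (par k + par l)) * (tt B k l s * tt A i j r)"
proof -
  have "A i j r * B k l s = (- 1) ^ ((par i + par j) * (par k + par l)) * B k l s * A i j r"
    using X ij pos unfolding super_commute_families_def by blast
  then show ?thesis using pos by (simp add: tt_def mult.assoc)
qed


theorem lemmaA2:
  fixes emb :: "'k::alg_closed_field \<Rightarrow> 'b::ring_1"
    and A B :: "nat \<Rightarrow> nat \<Rightarrow> nat \<Rightarrow> 'b"
    and n :: nat
  assumes char_k: "CHAR('k) > 2"
    and alg: "is_algebra_over emb"
    and relA: "yangian_rels A"
    and relB: "yangian_rels B"
    and cross: "super_commute_families A B"
    and n_pos: "n > 0"
  shows "prod_list (map (\<lambda>c. tser (Delta_gen A B) 1 1 c) (rev [0..<n]))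
       = prod_list (map (\<lambda>c. tser A 1 1 c) (rev [0..<n]))
           * prod_list (map (\<lambda>c. tser B 1 1 c) [0..<n])
         + of_nat n *
           ((tser A 1 2 (n - 1) * prod_list (map (\<lambda>c. tser A 1 1 c) (rev [0..<n - 1])))
            * (prod_list (map (\<lambda>c. tser B 1 1 c) [0..<n - 1]) * tser B 2 1 (n - 1)))"
proof -
  have half: "Z = 0" if h: "Z + Z = 0" for Z :: "'b fps"
  proof -
    have two: "(2::'k) \<noteq> 0"
    proof
      assume "(2::'k) = 0"
      then have "(of_nat 2 :: 'k) = 0" by simp
      then have "CHAR('k) dvd 2" by (simp only: of_nat_eq_0_iff_char_dvd)
      then have "CHAR('k) \<le> 2" by (rule dvd_imp_le) simp
      then show False using char_k by simp
    qed
    have e1: "emb 1 = 1" and eadd: "\<And>x y. emb (x + y) = emb x + emb y"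
      and emul: "\<And>x y. emb (x * y) = emb x * emb y"
      using alg unfolding is_algebra_over_def by blast+
    have e2: "emb 2 = 2"
    proof -
      have "emb (1 + 1) = emb 1 + emb 1" by (rule eadd)
      then show ?thesis using e1 by simp
    qed
    have inv: "emb (1/2) * 2 = 1"
    proof -
      have "emb (1/2) * emb 2 = emb (1/2 * 2)" by (rule emul[symmetric])
      moreover have "(1/2 * 2 :: 'k) = 1" using two by simp
      ultimately show ?thesis using e1 e2 by simp
    qed
    show ?thesis
    proof (rule fps_ext)
      fix m
      have "Z $ m = emb (1/2) * 2 * Z $ m" by (simp add: inv)
      also have "\<dots> = emb (1/2) * (Z + Z) $ m" by (simp add: mult.assoc mult_2)
      finally show "Z $ m = 0 $ m" using h by simp
    qed
  qed
  let ?TA = "\<lambda>c. ser (tt A 1 1) c" and ?EA = "\<lambda>c. ser (tt A 1 2) c"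
  let ?TB = "\<lambda>c. ser (tt B 1 1) c" and ?FB = "\<lambda>c. ser (tt B 2 1) c"
  have TBc: "\<And>c d. ?TB c * ?TB d = ?TB d * ?TB c"
    by (rule ser_comm) (rule Tcomm[OF relB])
  have L2: "\<And>d. ?TA (Suc d) * ?EA d = ?EA (Suc d) * ?TA d"
    by (rule ser_L2[OF relA])
  have L3: "\<And>d. ?EA (Suc d) * ?EA d = 0"
    by (rule half) (rule ser_L3[OF relA])
  have L4: "\<And>d. ?FB d * ?TB (Suc d) = ?TB d * ?FB (Suc d)"
  proof -
    fix d
    show "?FB d * ?TB (Suc d) = ?TB d * ?FB (Suc d)"
      using ser_L45[OF relB, of "Suc d" d] by simp
  qed
  have L5: "\<And>c k. of_nat k * (?TB (c + k) * ?FB c - ?FB c * ?TB (c + k)) = ?FB c * ?TB (c + k) - ?FB (c + k) * ?TB c"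
  proof -
    fix c k
    have h: "(of_nat c - of_nat (c + k)) * (?TB (c + k) * ?FB c - ?FB c * ?TB (c + k))
        = ?FB (c + k) * ?TB c - ?FB c * ?TB (c + k)"
      by (rule ser_L45[OF relB])
    have "(of_nat c - of_nat (c + k) :: 'b fps) = - of_nat k" by simp
    with h show "of_nat k * (?TB (c + k) * ?FB c - ?FB c * ?TB (c + k)) = ?FB c * ?TB (c + k) - ?FB (c + k) * ?TB c"
      by (simp add: minus_equation_iff[of "of_nat k * _"])
  qed
  have X1: "\<And>c d. ?TA c * ?TB d = ?TB d * ?TA c"
  proof (rule ser_comm)
    fix r s
    show "tt A 1 1 r * tt B 1 1 s = tt B 1 1 s * tt A 1 1 r"
      using cross_coef[OF cross, of 1 1 1 1 r s] by (cases "r = 0 \<or> s = 0") (auto simp: tt0 par_def)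
  qed
  have X2: "\<And>c d. ?EA c * ?TB d = ?TB d * ?EA c"
  proof (rule ser_comm)
    fix r s
    show "tt A 1 2 r * tt B 1 1 s = tt B 1 1 s * tt A 1 2 r"
      using cross_coef[OF cross, of 1 2 1 1 r s] by (cases "r = 0 \<or> s = 0") (auto simp: tt0 par_def)
  qed
  have X3: "\<And>c d. ?TA c * ?FB d = ?FB d * ?TA c"
  proof (rule ser_comm)
    fix r s
    show "tt A 1 1 r * tt B 2 1 s = tt B 2 1 s * tt A 1 1 r"
      using cross_coef[OF cross, of 1 1 2 1 r s] by (cases "r = 0 \<or> s = 0") (auto simp: tt0 par_def)
  qed
  have X4: "\<And>c d. ?EA c * ?FB d = - (?FB d * ?EA c)"
  proof (rule ser_anticomm)
    fix r s
    show "tt A 1 2 r * tt B 2 1 s = - (tt B 2 1 s * tt A 1 2 r)"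
      using cross_coef[OF cross, of 1 2 2 1 r s] by (cases "r = 0 \<or> s = 0") (auto simp: tt0 par_def)
  qed
  obtain n' where n: "n = Suc n'" using n_pos by (cases n) auto
  have C: "PA (\<lambda>i. ?TA i * ?TB i + ?EA i * ?FB i) (Suc n') 0
       = PA ?TA (Suc n') 0 * QB ?TB (Suc n') 0
         + of_nat (Suc n') * ((?EA (0 + n') * PA ?TA n' 0) * (QB ?TB n' 0 * ?FB (0 + n')))"
    by (rule core[where TA="?TA" and EA="?EA" and TB="?TB" and FB="?FB", OF TBc L2 L3 L4 L5 X1 X2 X3 X4])
  show ?thesis
    using C unfolding n PA_def QB_def tser_ser Delta_ser by simp
qed

end
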